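(* Every flip automata network has invariant histories: for every flip automata network $\mathcal{A}=(T,S,\{f_i\}_{i\in I})$ and every initial configuration, the update history of each individual node (the sequence of distinct successive states the node takes) is the same under every update schedule.
   Context: A flip automata network (FAN) is a triple $\mathcal{A}=(T,S,\{f_i\}_{i\in I})$ where $T=(I,E)$ is an undirected graph with vertex set $I=\{v_i\}$ and edges $E\subseteq\{\{v_i,v_j\}: i\neq j\}$, each edge carrying a direction indicator in $\{\nearrow,\swarrow\}$ ($\nearrow$ points to the endpoint with larger index, $\swarrow$ to the endpoint with smaller index); the neighborhood $N(v_i)=\{v\in I:\{v,v_i\}\in E\}$ is finite for every $v_i$; $S$ is a state set; and for each $i$, $f_i: S^{N(v_i)\cup\{v_i\}}\to S\times\{\nearrow,\swarrow\}^{N(v_i)}$ is the flip function of $v_i$. A configuration assigns a state to each node and a direction indicator to each edge. The function $f_i$ is applicable only if the direction indicators on all edges between $v_i$ and its neighbors point towards $v_i$; applying it may update the state of $v_i$ and flip the direction indicator on any of the edges incident to $v_i$ (as prescribed by its output). An update schedule is a function $\zeta:\mathbb{N}\to\mathcal{P}(I)$; at time $t$ the flip functions of the nodes in $\zeta(t)$ are applied (where applicable). The update history of a node records the sequence of states it takes, recording only genuine state changes (ignoring updates that do not change the state and the times at which they occur). Invariant histories means all update schedules from the same initial configuration yield the same update history for every node. *)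

theory Defs
  imports Main
begin

text \<open>The undirected graph T is given by a symmetric irreflexive adjacency relation adj;
  an edge is the two-element set {i, j}.  The direction indicator of an edge is
  Up (points to the endpoint with larger index) or Down (smaller index).\<close>

datatype dir = Up | Down

definition points_to :: "dir \<Rightarrow> 'i::linorder set \<Rightarrow> 'i \<Rightarrow> bool" where
  "points_to d e i \<longleftrightarrow> (d = Up \<and> i = Max e) \<or> (d = Down \<and> i = Min e)"

definition applicable :: "('i::linorder \<Rightarrow> 'i \<Rightarrow> bool) \<Rightarrow> ('i set \<Rightarrow> dir) \<Rightarrow> 'i \<Rightarrow> bool" where
  "applicable adj \<delta> i \<longleftrightarrow> (\<forall>j. adj i j \<longrightarrow> points_to (\<delta> {i, j}) {i, j} i)"

text \<open>The input of f_i: the states on the closed neighbourhood N(i) \<union> {i} only.\<close>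
definition local_view :: "('i \<Rightarrow> 'i \<Rightarrow> bool) \<Rightarrow> ('i \<Rightarrow> 's) \<Rightarrow> 'i \<Rightarrow> ('i \<Rightarrow> 's)" where
  "local_view adj \<sigma> i = (\<lambda>j. if j = i \<or> adj i j then \<sigma> j else undefined)"

definition fires :: "('i::linorder \<Rightarrow> 'i \<Rightarrow> bool) \<Rightarrow> 'i set \<Rightarrow> ('i set \<Rightarrow> dir) \<Rightarrow> 'i \<Rightarrow> bool" where
  "fires adj Z \<delta> i \<longleftrightarrow> i \<in> Z \<and> applicable adj \<delta> i"

text \<open>One time step: configuration = (node states, edge indicators).  The output
  of f_i gives the new state of i and the new indicators of the edges {i,j}, j \<in> N(i).\<close>
definition step ::
  "('i::linorder \<Rightarrow> 'i \<Rightarrow> bool) \<Rightarrow> ('i \<Rightarrow> ('i \<Rightarrow> 's) \<Rightarrow> 's \<times> ('i \<Rightarrow> dir))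
   \<Rightarrow> 'i set \<Rightarrow> ('i \<Rightarrow> 's) \<times> ('i set \<Rightarrow> dir) \<Rightarrow> ('i \<Rightarrow> 's) \<times> ('i set \<Rightarrow> dir)" where
  "step adj f Z c = (case c of (\<sigma>, \<delta>) \<Rightarrow>
     ((\<lambda>i. if fires adj Z \<delta> i then fst (f i (local_view adj \<sigma> i)) else \<sigma> i),
      (\<lambda>e. if (\<exists>a b. e = {a, b} \<and> adj a b) then
              (if fires adj Z \<delta> (Min e) then snd (f (Min e) (local_view adj \<sigma> (Min e))) (Max e)
               else if fires adj Z \<delta> (Max e) then snd (f (Max e) (local_view adj \<sigma> (Max e))) (Min e)
               else \<delta> e)
            else \<delta> e)))"

primrec run ::
  "('i::linorder \<Rightarrow> 'i \<Rightarrow> bool) \<Rightarrow> ('i \<Rightarrow> ('i \<Rightarrow> 's) \<Rightarrow> 's \<times> ('i \<Rightarrow> dir))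
   \<Rightarrow> (nat \<Rightarrow> 'i set) \<Rightarrow> ('i \<Rightarrow> 's) \<times> ('i set \<Rightarrow> dir) \<Rightarrow> nat \<Rightarrow> ('i \<Rightarrow> 's) \<times> ('i set \<Rightarrow> dir)" where
  "run adj f \<zeta> c0 0 = c0"
| "run adj f \<zeta> c0 (Suc t) = step adj f (\<zeta> t) (run adj f \<zeta> c0 t)"

text \<open>Update history of a state sequence x: the sequence of distinct successive
  states (stuttering removed), possibly infinite.  It is represented by the set of
  all its nonempty finite prefixes, which determines it uniquely.\<close>
definition history :: "(nat \<Rightarrow> 's) \<Rightarrow> 's list set" where
  "history x = range (\<lambda>t. remdups_adj (map x [0..<Suc t]))"

definition fair_schedule :: "(nat \<Rightarrow> 'i set) \<Rightarrow> bool" where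
  "fair_schedule \<zeta> \<longleftrightarrow> (\<forall>i t. \<exists>t'\<ge>t. i \<in> \<zeta> t')"

end

theory Submission
  imports Defs
begin


definition cstep :: "(nat \<Rightarrow> nat) \<Rightarrow> bool" where
  "cstep g \<longleftrightarrow> (\<forall>t. g (Suc t) = g t \<or> g (Suc t) = Suc (g t))"

lemma cstep_mono: "cstep g \<Longrightarrow> a \<le> b \<Longrightarrow> g a \<le> g b"
  by (rule lift_Suc_mono_le[of g]) (auto simp: cstep_def, metis le_SucI order_refl)

lemma cstep_cross: assumes "cstep g"
  shows "g a \<le> n \<Longrightarrow> n < g b \<Longrightarrow> a \<le> b \<Longrightarrow> \<exists>u. a \<le> u \<and> u < b \<and> g u = n \<and> g (Suc u) = Suc n"
proof (induction b)
  case 0 then show ?case by simp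
next
  case (Suc b)
  show ?case
  proof (cases "a = Suc b")
    case True then show ?thesis using Suc by simp
  next
    case False
    then have ab: "a \<le> b" using Suc by simp
    show ?thesis
    proof (cases "n < g b")
      case True then show ?thesis using Suc.IH Suc.prems ab by (meson less_SucI)
    next
      case False
      then have "g b = n" "g (Suc b) = Suc n" using Suc.prems assms unfolding cstep_def
        by (metis le_SucE not_less_eq_eq nat_less_le)+
      then show ?thesis using ab by blast
    qed
  qed
qed

lemma cstep_ivt: assumes "cstep g" "g a \<le> k" "k \<le> g b" "a \<le> b"
  shows "\<exists>u. a \<le> u \<and> u \<le> b \<and> g u = k"
proof (cases "k = g b")
  case True then show ?thesis using assms by blast
next
  case False
  then have "k < g b" using assms by simp
  then show ?thesis using cstep_cross[OF assms(1) assms(2)] assms(4) by (meson less_imp_le)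
qed

lemma cstep_squeeze: "cstep g \<Longrightarrow> a \<le> v \<Longrightarrow> v \<le> b \<Longrightarrow> g a = g b \<Longrightarrow> g v = g a"
  by (metis cstep_mono le_antisym)

lemma cstep_last: assumes "cstep g" "g 0 = 0" "g t = Suc n"
  shows "\<exists>u<t. g u = n \<and> g (Suc u) = Suc n \<and> (\<forall>v. Suc u \<le> v \<and> v \<le> t \<longrightarrow> g v = Suc n)"
proof -
  obtain u where u: "u < t" "g u = n" "g (Suc u) = Suc n"
    using cstep_cross[OF assms(1), of 0 n t] assms by auto
  then have "\<forall>v. Suc u \<le> v \<and> v \<le> t \<longrightarrow> g v = Suc n"
    using cstep_squeeze[OF assms(1), of "Suc u" _ t] assms(3) by auto
  then show ?thesis using u by blast
qed

lemma history_repr: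
  fixes x :: "nat \<Rightarrow> 's" and c :: "nat \<Rightarrow> nat"
  assumes "cstep c" "c 0 = 0"
    and xc: "\<And>t t1. c t = c t1 \<Longrightarrow> x t = x t1"
  shows "history x = (\<lambda>k. remdups_adj (map (\<lambda>k. x (SOME t. c t = k)) [0..<Suc k])) ` range c"
proof -
  define Y where "Y k = x (SOME t. c t = k)" for k
  have Yc: "Y (c t) = x t" for t
    unfolding Y_def by (rule xc, rule someI_ex[of "\<lambda>u. c u = c t"]) blast
  have R: "remdups_adj (map x [0..<Suc t]) = remdups_adj (map Y [0..<Suc (c t)])" for t
  proof (induction t)
    case 0 then show ?case using Yc[of 0] assms(2) by simp
  next
    case (Suc t)
    have e1: "map x [0..<Suc (Suc t)] = map x [0..<t] @ [x t, x (Suc t)]" by simp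
    have e1': "map x [0..<Suc t] = map x [0..<t] @ [x t]" by simp
    have r1: "remdups_adj (map x [0..<Suc (Suc t)]) = remdups_adj (map Y [0..<Suc (c t)]) @ (if x t = x (Suc t) then [] else [x (Suc t)])"
      using Suc.IH unfolding e1 remdups_adj_append_two e1'[symmetric] by simp
    show ?case
    proof (cases "c (Suc t) = c t")
      case True
      then show ?thesis using r1 xc[of t "Suc t"] by simp
    next
      case False
      then have cs: "c (Suc t) = Suc (c t)" using assms(1) unfolding cstep_def by metis
      have e2: "map Y [0..<Suc (Suc (c t))] = map Y [0..<c t] @ [Y (c t), Y (Suc (c t))]" by simp
      have e2': "map Y [0..<Suc (c t)] = map Y [0..<c t] @ [Y (c t)]" by simp
      show ?thesis unfolding r1 cs e2 remdups_adj_append_two e2'[symmetric]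
        using Yc[of t] Yc[of "Suc t"] cs by simp
    qed
  qed
  show ?thesis
    unfolding history_def using R unfolding Y_def by (auto simp: image_iff)
qed

lemma history_eq:
  fixes x x' :: "nat \<Rightarrow> 's" and c c' :: "nat \<Rightarrow> nat"
  assumes "cstep c" "c 0 = 0" "cstep c'" "c' 0 = 0" "range c = range c'"
    and agr: "\<And>t t'. c t = c' t' \<Longrightarrow> x t = x' t'"
  shows "history x = history x'"
proof -
  have xc: "x t = x t1" if "c t = c t1" for t t1
  proof -
    obtain t' where "c' t' = c t" using assms(5) by (metis rangeE rangeI)
    then show ?thesis using agr that by metis
  qed
  have xc': "x' t = x' t1" if "c' t = c' t1" for t t1
  proof -
    obtain t' where "c t' = c' t" using assms(5) by (metis rangeE rangeI)
    then show ?thesis using agr that by metis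
  qed
  have YY: "x' (SOME t. c' t = k) = x (SOME t. c t = k)" if "k \<in> range c" for k
  proof -
    have "\<exists>t. c' t = k" using that assms(5) by auto
    then have a: "c' (SOME t. c' t = k) = k" by (rule someI_ex)
    have "\<exists>t. c t = k" using that by auto
    then have b: "c (SOME t. c t = k) = k" by (rule someI_ex)
    show ?thesis using agr a b by metis
  qed
  have YY2: "map (\<lambda>k. x' (SOME t. c' t = k)) [0..<Suc k] = map (\<lambda>k. x (SOME t. c t = k)) [0..<Suc k]"
    if "k \<in> range c" for k
  proof -
    have "j \<in> range c" if "j \<le> k" for j
    proof -
      obtain t where "c t = k" using \<open>k \<in> range c\<close> by auto
      then show ?thesis using cstep_ivt[OF assms(1), of 0 j t] assms(2) that by auto
    qed
    then show ?thesis using YY by (auto intro!: map_cong)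
  qed
  have h1: "history x = (\<lambda>k. remdups_adj (map (\<lambda>k. x (SOME t. c t = k)) [0..<Suc k])) ` range c"
    by (rule history_repr[OF assms(1,2) xc])
  have h2: "history x' = (\<lambda>k. remdups_adj (map (\<lambda>k. x' (SOME t. c' t = k)) [0..<Suc k])) ` range c"
    unfolding assms(5) by (rule history_repr[OF assms(3,4) xc'])
  show ?thesis unfolding h1 h2 by (rule image_cong) (metis YY2)+
qed



lemma Max2: "Max {i, j::'a::linorder} = max i j" by simp
lemma Min2: "Min {i, j::'a::linorder} = min i j" by simp

lemma pt_excl: "(i::'a::linorder) \<noteq> j \<Longrightarrow> points_to d {i,j} i \<Longrightarrow> points_to d {i,j} j \<Longrightarrow> False"
  by (cases d) (auto simp: points_to_def max_def min_def split: if_splits)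

lemma pt_one: "(i::'a::linorder) \<noteq> j \<Longrightarrow> \<not> points_to d {i,j} i \<Longrightarrow> points_to d {i,j} j"
  by (cases d) (auto simp: points_to_def max_def min_def split: if_splits)

context
  fixes adj :: "'i::linorder \<Rightarrow> 'i \<Rightarrow> bool"
    and f :: "'i \<Rightarrow> ('i \<Rightarrow> 's) \<Rightarrow> 's \<times> ('i \<Rightarrow> dir)"
    and c0 :: "('i \<Rightarrow> 's) \<times> ('i set \<Rightarrow> dir)"
  assumes symm: "\<forall>i j. adj i j \<longrightarrow> adj j i"
    and irr: "\<forall>i. \<not> adj i i"
begin

definition sg :: "(nat \<Rightarrow> 'i set) \<Rightarrow> nat \<Rightarrow> 'i \<Rightarrow> 's" where
  "sg z t = fst (run adj f z c0 t)"
definition dg :: "(nat \<Rightarrow> 'i set) \<Rightarrow> nat \<Rightarrow> 'i set \<Rightarrow> dir" where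
  "dg z t = snd (run adj f z c0 t)"
definition FF :: "(nat \<Rightarrow> 'i set) \<Rightarrow> nat \<Rightarrow> 'i \<Rightarrow> bool" where
  "FF z t i \<longleftrightarrow> fires adj (z t) (dg z t) i"

primrec cnt :: "(nat \<Rightarrow> 'i set) \<Rightarrow> 'i \<Rightarrow> nat \<Rightarrow> nat" where
  "cnt z i 0 = 0"
| "cnt z i (Suc t) = (if FF z t i then Suc (cnt z i t) else cnt z i t)"

lemma sg0: "sg z 0 = fst c0" by (simp add: sg_def)
lemma dg0: "dg z 0 = snd c0" by (simp add: dg_def)

lemma sg_Suc: "sg z (Suc t) i = (if FF z t i then fst (f i (local_view adj (sg z t) i)) else sg z t i)"
  by (simp add: sg_def dg_def FF_def step_def split: prod.split)

lemma dg_Suc: "dg z (Suc t) e = (if (\<exists>a b. e = {a, b} \<and> adj a b) then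
              (if FF z t (Min e) then snd (f (Min e) (local_view adj (sg z t) (Min e))) (Max e)
               else if FF z t (Max e) then snd (f (Max e) (local_view adj (sg z t) (Max e))) (Min e)
               else dg z t e)
            else dg z t e)"
proof -
  obtain \<sigma> \<delta> where r: "run adj f z c0 t = (\<sigma>, \<delta>)" by (cases "run adj f z c0 t")
  show ?thesis unfolding dg_def sg_def FF_def by (auto simp: r step_def)
qed

lemma F_pt: "FF z t i \<Longrightarrow> adj i j \<Longrightarrow> points_to (dg z t {i,j}) {i,j} i"
  by (simp add: FF_def fires_def applicable_def)

lemma adj_neq: "adj i j \<Longrightarrow> i \<noteq> j" using irr by auto

lemma no_both: "adj i j \<Longrightarrow> FF z t i \<Longrightarrow> FF z t j \<Longrightarrow> False"
proof -
  assume a: "adj i j" "FF z t i" "FF z t j"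
  have "points_to (dg z t {i,j}) {i,j} i" using F_pt a by blast
  moreover have "points_to (dg z t {i,j}) {i,j} j" using F_pt[of z t j i] a symm by (simp add: insert_commute)
  ultimately show False using pt_excl adj_neq a by blast
qed

lemma dg_edge: assumes "adj i j"
  shows "dg z (Suc t) {i,j} = (if FF z t i then snd (f i (local_view adj (sg z t) i)) j
      else if FF z t j then snd (f j (local_view adj (sg z t) j)) i else dg z t {i,j})"
proof -
  have ex: "\<exists>a b. {i,j} = {a, b} \<and> adj a b" using assms by blast
  show ?thesis
  proof (cases "i < j")
    case True
    then show ?thesis using ex by (subst dg_Suc) (auto simp: min_def max_def)
  next
    case False
    then have "j < i" using adj_neq[OF assms] by auto
    then show ?thesis using ex no_both[OF assms, of z t] by (subst dg_Suc) (auto simp: min_def max_def)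
  qed
qed

lemma sg_const: "(\<forall>v. a \<le> v \<and> v < b \<longrightarrow> \<not> FF z v i) \<Longrightarrow> a \<le> b \<Longrightarrow> sg z b i = sg z a i"
  by (induction b) (auto simp: sg_Suc le_Suc_eq)

lemma dg_const: "adj i j \<Longrightarrow> (\<forall>v. a \<le> v \<and> v < b \<longrightarrow> \<not> FF z v i \<and> \<not> FF z v j) \<Longrightarrow> a \<le> b
   \<Longrightarrow> dg z b {i,j} = dg z a {i,j}"
  by (induction b) (auto simp: dg_edge le_Suc_eq)

lemma cnt_cstep: "cstep (cnt z i)" by (simp add: cstep_def)

lemma cnt_F: "cnt z i (Suc t) = Suc (cnt z i t) \<longleftrightarrow> FF z t i" by simp
lemma cnt_nF: "cnt z i (Suc t) = cnt z i t \<longleftrightarrow> \<not> FF z t i" by simp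

lemma sum_cstep: "adj i j \<Longrightarrow> cstep (\<lambda>t. cnt z i t + cnt z j t)"
  using no_both by (auto simp: cstep_def)

lemma F_unique: assumes "FF z u i" "FF z v i" "cnt z i u = cnt z i v" shows "u = v"
proof (rule ccontr)
  assume "u \<noteq> v"
  then consider "u < v" | "v < u" by linarith
  then show False
  proof cases
    case 1
    then have "cnt z i (Suc u) \<le> cnt z i v" by (intro cstep_mono[OF cnt_cstep]) simp
    then show False using assms by simp
  next
    case 2
    then have "cnt z i (Suc v) \<le> cnt z i u" by (intro cstep_mono[OF cnt_cstep]) simp
    then show False using assms by simp
  qed
qed

definition Agree :: "(nat \<Rightarrow> 'i set) \<Rightarrow> (nat \<Rightarrow> 'i set) \<Rightarrow> 'i \<Rightarrow> nat \<Rightarrow> bool" where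
  "Agree z z' i k \<longleftrightarrow> (\<forall>u u'. FF z u i \<longrightarrow> FF z' u' i \<longrightarrow> cnt z i u = k \<longrightarrow> cnt z' i u' = k
      \<longrightarrow> local_view adj (sg z u) i = local_view adj (sg z' u') i)"

lemma sg_cnt0: "cnt z i t = 0 \<Longrightarrow> sg z t i = fst c0 i"
proof -
  assume a: "cnt z i t = 0"
  have "\<forall>v. 0 \<le> v \<and> v < t \<longrightarrow> \<not> FF z v i"
  proof (intro allI impI)
    fix v assume "0 \<le> v \<and> v < t"
    then have "cnt z i (Suc v) \<le> cnt z i t" by (intro cstep_mono[OF cnt_cstep]) simp
    then show "\<not> FF z v i" using a by (auto split: if_splits)
  qed
  then show ?thesis using sg_const[of 0 t z i] sg0 by simp
qed

lemma sg_cntS: assumes "cnt z i t = Suc n"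
  shows "\<exists>u<t. FF z u i \<and> cnt z i u = n \<and> sg z t i = fst (f i (local_view adj (sg z u) i))"
proof -
  obtain u where u: "u < t" "cnt z i u = n" "cnt z i (Suc u) = Suc n"
    and c: "\<forall>v. Suc u \<le> v \<and> v \<le> t \<longrightarrow> cnt z i v = Suc n"
    using cstep_last[OF cnt_cstep, of z i t n] assms by auto
  have F: "FF z u i" using u by (simp split: if_splits)
  have "\<forall>v. Suc u \<le> v \<and> v < t \<longrightarrow> \<not> FF z v i"
  proof (intro allI impI)
    fix v assume "Suc u \<le> v \<and> v < t"
    then have "cnt z i v = Suc n" "cnt z i (Suc v) = Suc n" using c by (auto simp del: cnt.simps)
    then show "\<not> FF z v i" by (metis cnt_F n_not_Suc_n)
  qed
  then have "sg z t i = sg z (Suc u) i" using sg_const[of "Suc u" t z i] u by simp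
  also have "\<dots> = fst (f i (local_view adj (sg z u) i))" using F sg_Suc by simp
  finally show ?thesis using u F by blast
qed

lemma S_lemma: assumes "\<forall>k<cnt z i t. Agree z z' i k" "cnt z i t = cnt z' i t'"
  shows "sg z t i = sg z' t' i"
proof (cases "cnt z i t")
  case 0
  then show ?thesis using sg_cnt0[of z i t] sg_cnt0[of z' i t'] assms by simp
next
  case (Suc n)
  obtain u where u: "u<t" "FF z u i" "cnt z i u = n" "sg z t i = fst (f i (local_view adj (sg z u) i))"
    using sg_cntS[OF Suc] by blast
  obtain u' where u': "u'<t'" "FF z' u' i" "cnt z' i u' = n" "sg z' t' i = fst (f i (local_view adj (sg z' u') i))"
    using sg_cntS[of z' i t' n] Suc assms by auto
  have "Agree z z' i n" using assms Suc by simp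
  then show ?thesis using u u' unfolding Agree_def by metis
qed


lemma cnt_const_noF: "a \<le> v \<Longrightarrow> v < b \<Longrightarrow> cnt z i a = cnt z i b \<Longrightarrow> \<not> FF z v i"
proof
  assume a: "a \<le> v" "v < b" "cnt z i a = cnt z i b" "FF z v i"
  have "cnt z i a \<le> cnt z i v" using a by (intro cstep_mono[OF cnt_cstep]) simp
  moreover have "cnt z i (Suc v) \<le> cnt z i b" using a by (intro cstep_mono[OF cnt_cstep]) simp
  ultimately show False using a by simp
qed

lemma pt_sym: "adj i j \<Longrightarrow> points_to d {i,j} i \<Longrightarrow> FF z t j \<Longrightarrow> dg z t {i,j} = d \<Longrightarrow> False"
  using F_pt[of z t j i] symm pt_excl adj_neq by (metis insert_commute)

lemma last_event: assumes "adj i j" "cnt z i t + cnt z j t = Suc n"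
  obtains u where "u < t" "cnt z i u + cnt z j u = n" "FF z u i \<or> FF z u j"
    "cnt z i t = cnt z i (Suc u)" "cnt z j t = cnt z j (Suc u)" "dg z t {i,j} = dg z (Suc u) {i,j}"
proof -
  let ?g = "\<lambda>t. cnt z i t + cnt z j t"
  obtain u where u: "u < t" "?g u = n" "?g (Suc u) = Suc n" and c: "\<forall>v. Suc u \<le> v \<and> v \<le> t \<longrightarrow> ?g v = Suc n"
    using cstep_last[OF sum_cstep[OF assms(1)], of z t n] assms(2) by auto
  have mi: "cnt z i (Suc u) \<le> cnt z i t" "cnt z j (Suc u) \<le> cnt z j t" using u(1)
    by (meson Suc_leI cnt_cstep cstep_mono)+
  have ei: "cnt z i t = cnt z i (Suc u)" "cnt z j t = cnt z j (Suc u)" using mi u assms(2) by linarith+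
  have "\<forall>v. Suc u \<le> v \<and> v < t \<longrightarrow> \<not> FF z v i \<and> \<not> FF z v j"
    using cnt_const_noF ei by metis
  then have "dg z t {i,j} = dg z (Suc u) {i,j}" using dg_const[OF assms(1), of "Suc u" t z] u by simp
  moreover have "FF z u i \<or> FF z u j" using u by (auto split: if_splits)
  ultimately show ?thesis using that u ei by blast
qed

lemma P_lemma: assumes "adj i j"
  shows "\<forall>t t'. cnt z i t + cnt z j t = n \<longrightarrow> cnt z' i t' + cnt z' j t' = n
    \<longrightarrow> (\<forall>k<cnt z i t. Agree z z' i k) \<longrightarrow> (\<forall>k<cnt z j t. Agree z z' j k)
    \<longrightarrow> cnt z i t = cnt z' i t' \<and> cnt z j t = cnt z' j t' \<and> dg z t {i,j} = dg z' t' {i,j}"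
proof (induction n)
  case 0
  show ?case
  proof (intro allI impI)
    fix t t' assume h: "cnt z i t + cnt z j t = 0" "cnt z' i t' + cnt z' j t' = 0"
    have "\<forall>v. 0 \<le> v \<and> v < t \<longrightarrow> \<not> FF z v i \<and> \<not> FF z v j" using h cnt_const_noF[of 0 _ t z] by auto
    then have "dg z t {i,j} = dg z 0 {i,j}" using dg_const[OF assms, of 0 t z] by simp
    moreover have "\<forall>v. 0 \<le> v \<and> v < t' \<longrightarrow> \<not> FF z' v i \<and> \<not> FF z' v j" using h cnt_const_noF[of 0 _ t' z'] by auto
    then have "dg z' t' {i,j} = dg z' 0 {i,j}" using dg_const[OF assms, of 0 t' z'] by simp
    ultimately show "cnt z i t = cnt z' i t' \<and> cnt z j t = cnt z' j t' \<and> dg z t {i,j} = dg z' t' {i,j}"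
      using h by (simp add: dg0)
  qed
next
  case (Suc n)
  show ?case
  proof (intro allI impI)
    fix t t' assume h: "cnt z i t + cnt z j t = Suc n" "cnt z' i t' + cnt z' j t' = Suc n"
      and ai: "\<forall>k<cnt z i t. Agree z z' i k" and aj: "\<forall>k<cnt z j t. Agree z z' j k"
    obtain u where u: "u < t" "cnt z i u + cnt z j u = n" "FF z u i \<or> FF z u j"
      "cnt z i t = cnt z i (Suc u)" "cnt z j t = cnt z j (Suc u)" "dg z t {i,j} = dg z (Suc u) {i,j}"
      using last_event[OF assms h(1)] by blast
    obtain u' where u': "u' < t'" "cnt z' i u' + cnt z' j u' = n" "FF z' u' i \<or> FF z' u' j"
      "cnt z' i t' = cnt z' i (Suc u')" "cnt z' j t' = cnt z' j (Suc u')" "dg z' t' {i,j} = dg z' (Suc u') {i,j}"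
      using last_event[OF assms h(2)] by blast
    have mi: "cnt z i u \<le> cnt z i t" "cnt z j u \<le> cnt z j t" using u(1)
      by (meson less_imp_le cnt_cstep cstep_mono)+
    have a1: "\<forall>k<cnt z i u. Agree z z' i k" "\<forall>k<cnt z j u. Agree z z' j k"
      using ai aj mi by auto
    have IH: "cnt z i u = cnt z' i u' \<and> cnt z j u = cnt z' j u' \<and> dg z u {i,j} = dg z' u' {i,j}"
      using Suc.IH u(2) u'(2) a1 by blast
    show "cnt z i t = cnt z' i t' \<and> cnt z j t = cnt z' j t' \<and> dg z t {i,j} = dg z' t' {i,j}"
    proof (cases "FF z u i")
      case True
      have p: "points_to (dg z u {i,j}) {i,j} i" using F_pt[OF True assms] .
      have nj: "\<not> FF z u j" using no_both[OF assms] True by blast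
      have nj': "\<not> FF z' u' j" using pt_sym[OF assms p] IH by metis
      have Fi': "FF z' u' i" using u'(3) nj' by blast
      have "Agree z z' i (cnt z i u)" using ai u(4) True by simp
      then have lv: "local_view adj (sg z u) i = local_view adj (sg z' u') i"
        unfolding Agree_def using True Fi' IH by metis
      show ?thesis using u u' IH True nj Fi' nj' lv by (simp add: dg_edge[OF assms])
    next
      case False
      then have Fj: "FF z u j" using u(3) by blast
      have sj: "adj j i" using assms symm by blast
      have p: "points_to (dg z u {i,j}) {i,j} j" using F_pt[OF Fj sj] by (simp add: insert_commute)
      have ni': "\<not> FF z' u' i" using F_pt[of z' u' i j, OF _ assms] pt_excl[OF adj_neq[OF assms]] p IH by metis
      have Fj': "FF z' u' j" using u'(3) ni' by blast
      have "Agree z z' j (cnt z j u)" using aj u(5) Fj by simp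
      then have lv: "local_view adj (sg z u) j = local_view adj (sg z' u') j"
        unfolding Agree_def using Fj Fj' IH by metis
      show ?thesis using u u' IH False Fj ni' Fj' lv by (simp add: dg_edge[OF assms])
    qed
  qed
qed

lemma stuck: assumes "adj i j" "points_to (dg z w {i,j}) {i,j} i"
  shows "w \<le> u \<Longrightarrow> cnt z i u = cnt z i w \<Longrightarrow> cnt z j u = cnt z j w \<and> dg z u {i,j} = dg z w {i,j}"
proof (induction u)
  case 0 then show ?case by simp
next
  case (Suc u)
  show ?case
  proof (cases "w = Suc u")
    case True then show ?thesis by simp
  next
    case False
    then have wu: "w \<le> u" using Suc by simp
    have "cnt z i w \<le> cnt z i u" "cnt z i u \<le> cnt z i (Suc u)" using wu
      by (auto intro!: cstep_mono[OF cnt_cstep])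
    then have ci: "cnt z i u = cnt z i w" using Suc by linarith
    then have ih: "cnt z j u = cnt z j w \<and> dg z u {i,j} = dg z w {i,j}" using Suc wu by blast
    have ni: "\<not> FF z u i" using Suc ci by (auto split: if_splits)
    have nj: "\<not> FF z u j" using pt_sym[OF assms(1,2)] ih by metis
    show ?thesis using ih ni nj by (simp add: dg_edge[OF assms(1)])
  qed
qed


definition QQ :: "(nat \<Rightarrow> 'i set) \<Rightarrow> (nat \<Rightarrow> 'i set) \<Rightarrow> nat \<Rightarrow> bool" where
  "QQ z z' s \<longleftrightarrow> (\<forall>i k. k < cnt z i s \<longrightarrow> (\<exists>u'. FF z' u' i \<and> cnt z' i u' = k) \<and> Agree z z' i k)"

lemma reach: assumes "QQ z z' s" "k \<le> cnt z i s" shows "\<exists>t'. cnt z' i t' = k"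
proof (cases k)
  case 0 then show ?thesis by (metis cnt.simps(1))
next
  case (Suc k')
  then have "k' < cnt z i s" using assms by simp
  then obtain u' where "FF z' u' i" "cnt z' i u' = k'" using assms unfolding QQ_def by blast
  then have "cnt z' i (Suc u') = k" using Suc by simp
  then show ?thesis by blast
qed

lemma sum0: "cnt z i 0 + cnt z j 0 = 0" by simp

lemma count_match: assumes Q: "QQ z z' s" and F: "FF z s i" and a: "adj i j"
  and F': "FF z' u' i" and c: "cnt z' i u' = cnt z i s"
  shows "cnt z' j u' = cnt z j s"
proof -
  define k where "k = cnt z i s"
  define m where "m = cnt z j s"
  define m' where "m' = cnt z' j u'"
  have ai: "\<forall>k'<cnt z i s. Agree z z' i k'" and aj: "\<forall>k'<cnt z j s. Agree z z' j k'"
    using Q unfolding QQ_def by auto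
  show ?thesis
  proof (cases "m \<le> m'")
    case True
    have "cnt z' i 0 + cnt z' j 0 \<le> k + m" "k + m \<le> cnt z' i u' + cnt z' j u'"
      using True c unfolding k_def m_def m'_def by simp_all
    then obtain w where w: "w \<le> u'" "cnt z' i w + cnt z' j w = k + m"
      using cstep_ivt[OF sum_cstep[OF a, of z'], of 0 "k+m" u'] by auto
    have P: "cnt z i s = cnt z' i w \<and> cnt z j s = cnt z' j w \<and> dg z s {i,j} = dg z' w {i,j}"
      using P_lemma[OF a, where z=z and z'=z' and n="k+m"] w ai aj unfolding k_def m_def by blast
    have p: "points_to (dg z' w {i,j}) {i,j} i" using F_pt[OF F a] P by simp
    have "cnt z' j u' = cnt z' j w" using stuck[OF a p w(1)] c P by simp
    then show ?thesis using P by simp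
  next
    case False
    have "cnt z i 0 + cnt z j 0 \<le> k + m'" "k + m' \<le> cnt z i s + cnt z j s"
      using False unfolding k_def m_def m'_def by simp_all
    then obtain w where w: "w \<le> s" "cnt z i w + cnt z j w = k + m'"
      using cstep_ivt[OF sum_cstep[OF a, of z], of 0 "k+m'" s] by auto
    have mi: "cnt z i w \<le> cnt z i s" "cnt z j w \<le> cnt z j s" using w(1)
      by (meson cnt_cstep cstep_mono)+
    have ai': "\<forall>k'<cnt z i w. Agree z z' i k'" "\<forall>k'<cnt z j w. Agree z z' j k'"
      using ai aj mi by auto
    have P: "cnt z i w = cnt z' i u' \<and> cnt z j w = cnt z' j u' \<and> dg z w {i,j} = dg z' u' {i,j}"
    proof -
      have e: "cnt z' i u' + cnt z' j u' = k + m'" using c unfolding k_def m'_def by simp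
      show ?thesis using P_lemma[OF a, where z=z and z'=z' and n="k+m'"] w(2) e ai' by blast
    qed
    have p: "points_to (dg z w {i,j}) {i,j} i" using F_pt[OF F' a] P by simp
    have "cnt z j s = cnt z j w" using stuck[OF a p w(1)] c P by simp
    then show ?thesis using P False unfolding m_def m'_def by simp
  qed
qed

lemma liveness: assumes fair: "fair_schedule z'" and fin: "finite {j. adj i j}"
  and Q: "QQ z z' s" and F: "FF z s i"
  shows "\<exists>u'. FF z' u' i \<and> cnt z' i u' = cnt z i s"
proof (rule ccontr)
  assume nf: "\<not> (\<exists>u'. FF z' u' i \<and> cnt z' i u' = cnt z i s)"
  define k where "k = cnt z i s"
  have ai: "\<forall>k'<cnt z i s. Agree z z' i k'" using Q unfolding QQ_def by auto
  obtain t0 where t0: "cnt z' i t0 = k" using reach[OF Q] k_def by blast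
  have stay: "cnt z' i u = k" if tu: "t0 \<le> u" for u
  proof (rule ccontr)
    assume "cnt z' i u \<noteq> k"
    then have "k < cnt z' i u" using cstep_mono[OF cnt_cstep[of z' i] tu] t0 by simp
    then obtain v where "cnt z' i v = k" "cnt z' i (Suc v) = Suc k"
      using cstep_cross[OF cnt_cstep[of z' i], of t0 k u] t0 tu by auto
    then show False using nf k_def by (auto split: if_splits)
  qed
  have edge: "\<exists>w. \<forall>u\<ge>w. points_to (dg z' u {i,j}) {i,j} i" if a: "adj i j" for j
  proof -
    define m where "m = cnt z j s"
    have aj: "\<forall>k'<cnt z j s. Agree z z' j k'" using Q unfolding QQ_def by auto
    obtain tj where tj: "cnt z' j tj = m" using reach[OF Q, of m j] m_def by auto
    define W where "W = max t0 tj"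
    have "cnt z' i W = k" using stay W_def by simp
    moreover have "m \<le> cnt z' j W" using tj W_def cstep_mono[OF cnt_cstep[of z' j], of tj W] by simp
    ultimately have "cnt z' i 0 + cnt z' j 0 \<le> k + m" "k + m \<le> cnt z' i W + cnt z' j W" by simp_all
    then obtain w where w: "w \<le> W" "cnt z' i w + cnt z' j w = k + m"
      using cstep_ivt[OF sum_cstep[OF a, of z'], of 0 "k+m" W] by auto
    have P: "cnt z i s = cnt z' i w \<and> cnt z j s = cnt z' j w \<and> dg z s {i,j} = dg z' w {i,j}"
      using P_lemma[OF a, where z=z and z'=z' and n="k+m"] w ai aj unfolding k_def m_def by blast
    have p: "points_to (dg z' w {i,j}) {i,j} i" using F_pt[OF F a] P by simp
    have "points_to (dg z' u {i,j}) {i,j} i" if "w \<le> u" for u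
    proof -
      have "cnt z' i u = cnt z' i w"
      proof (cases "t0 \<le> u")
        case True then show ?thesis using stay P k_def by simp
      next
        case False
        then have "cnt z' i w \<le> cnt z' i u" "cnt z' i u \<le> cnt z' i t0" using that
          by (meson cnt_cstep cstep_mono nat_le_linear)+
        then show ?thesis using t0 P k_def by simp
      qed
      then show ?thesis using stuck[OF a p that] p by simp
    qed
    then show ?thesis by blast
  qed
  then obtain wf where wf: "\<And>j u. adj i j \<Longrightarrow> wf j \<le> u \<Longrightarrow> points_to (dg z' u {i,j}) {i,j} i"
    by metis
  define T where "T = Max (insert t0 (wf ` {j. adj i j}))"
  have fT: "finite (insert t0 (wf ` {j. adj i j}))" using fin by simp
  obtain u where u: "T \<le> u" "i \<in> z' u" using fair unfolding fair_schedule_def by blast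
  have "t0 \<le> T" unfolding T_def using fT by simp
  have "wf j \<le> T" if "adj i j" for j unfolding T_def using fT that by simp
  then have "FF z' u i" using u wf unfolding FF_def fires_def applicable_def
    by (meson order_trans)
  moreover have "cnt z' i u = k" using stay u \<open>t0 \<le> T\<close> by simp
  ultimately show False using nf k_def by blast
qed

lemma QQ_all: assumes fair: "fair_schedule z'" and fin: "\<forall>i. finite {j. adj i j}"
  shows "QQ z z' s"
proof (induction s)
  case 0 then show ?case by (simp add: QQ_def)
next
  case (Suc s)
  show ?case unfolding QQ_def
  proof (intro allI impI)
    fix i k assume k: "k < cnt z i (Suc s)"
    show "(\<exists>u'. FF z' u' i \<and> cnt z' i u' = k) \<and> Agree z z' i k"
    proof (cases "k < cnt z i s")
      case True then show ?thesis using Suc.IH unfolding QQ_def by blast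
    next
      case False
      then have F: "FF z s i" and kk: "k = cnt z i s" using k by (auto simp: less_Suc_eq split: if_splits)
      have ex: "\<exists>u'. FF z' u' i \<and> cnt z' i u' = k"
        unfolding kk by (rule liveness[OF fair _ Suc.IH F]) (use fin in blast)
      have ag: "Agree z z' i k" unfolding Agree_def
      proof (intro allI impI)
        fix u u' assume h: "FF z u i" "FF z' u' i" "cnt z i u = k" "cnt z' i u' = k"
        have "cnt z i u = cnt z i s" using h(3) kk by simp
        then have us: "u = s" by (rule F_unique[OF h(1) F])
        show "local_view adj (sg z u) i = local_view adj (sg z' u') i"
          unfolding local_view_def
        proof (rule ext)
          fix j
          show "(if j = i \<or> adj i j then sg z u j else undefined) = (if j = i \<or> adj i j then sg z' u' j else undefined)"
          proof (cases "j = i")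
            case True
            have "\<forall>k'<cnt z i s. Agree z z' i k'" using Suc.IH unfolding QQ_def by auto
            moreover have "cnt z i s = cnt z' i u'" using h kk by simp
            ultimately have "sg z s i = sg z' u' i" by (rule S_lemma)
            then show ?thesis using True us by simp
          next
            case False
            show ?thesis
            proof (cases "adj i j")
              case True
              have c: "cnt z' j u' = cnt z j s" using count_match[OF Suc.IH F True h(2)] h kk by simp
              have "\<forall>k'<cnt z j s. Agree z z' j k'" using Suc.IH unfolding QQ_def by auto
              then have "sg z s j = sg z' u' j" using c by (intro S_lemma) simp_all
              then show ?thesis using us by simp
            qed (simp add: False)
          qed
        qed
      qed
      show ?thesis using ex ag by blast
    qed
  qed
qed

end

theorem mainTheorem1:
  fixes adj :: "'i::linorder \<Rightarrow> 'i \<Rightarrow> bool"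
    and f :: "'i \<Rightarrow> ('i \<Rightarrow> 's) \<Rightarrow> 's \<times> ('i \<Rightarrow> dir)"
    and \<sigma>0 :: "'i \<Rightarrow> 's" and \<delta>0 :: "'i set \<Rightarrow> dir"
    and \<zeta> \<zeta>' :: "nat \<Rightarrow> 'i set"
  assumes "\<forall>i j. adj i j \<longrightarrow> adj j i"
    and "\<forall>i. \<not> adj i i"
    and "\<forall>i. finite {j. adj i j}"
    and "fair_schedule \<zeta>" and "fair_schedule \<zeta>'"
  shows "\<forall>i. history (\<lambda>t. fst (run adj f \<zeta> (\<sigma>0, \<delta>0) t) i)
           = history (\<lambda>t. fst (run adj f \<zeta>' (\<sigma>0, \<delta>0) t) i)"
proof
  fix i
  define c0 where "c0 = (\<sigma>0, \<delta>0)"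
  have Q1: "QQ adj f c0 \<zeta> \<zeta>' s" for s by (rule QQ_all[OF assms(1,2) assms(5) assms(3)])
  have Q2: "QQ adj f c0 \<zeta>' \<zeta> s" for s by (rule QQ_all[OF assms(1,2) assms(4) assms(3)])
  have x1: "(\<lambda>t. fst (run adj f \<zeta> (\<sigma>0, \<delta>0) t) i) = (\<lambda>t. sg adj f c0 \<zeta> t i)"
    by (simp add: sg_def[OF assms(1,2)] c0_def)
  have x2: "(\<lambda>t. fst (run adj f \<zeta>' (\<sigma>0, \<delta>0) t) i) = (\<lambda>t. sg adj f c0 \<zeta>' t i)"
    by (simp add: sg_def[OF assms(1,2)] c0_def)
  have rng: "range (cnt adj f c0 \<zeta> i) = range (cnt adj f c0 \<zeta>' i)"
  proof
    show "range (cnt adj f c0 \<zeta> i) \<subseteq> range (cnt adj f c0 \<zeta>' i)"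
    proof
      fix k assume "k \<in> range (cnt adj f c0 \<zeta> i)"
      then obtain t where "cnt adj f c0 \<zeta> i t = k" by auto
      then have "\<exists>t'. cnt adj f c0 \<zeta>' i t' = k" using reach[OF assms(1,2) Q1[of t]] by simp
      then show "k \<in> range (cnt adj f c0 \<zeta>' i)" by auto
    qed
    show "range (cnt adj f c0 \<zeta>' i) \<subseteq> range (cnt adj f c0 \<zeta> i)"
    proof
      fix k assume "k \<in> range (cnt adj f c0 \<zeta>' i)"
      then obtain t where "cnt adj f c0 \<zeta>' i t = k" by auto
      then have "\<exists>t'. cnt adj f c0 \<zeta> i t' = k" using reach[OF assms(1,2) Q2[of t]] by simp
      then show "k \<in> range (cnt adj f c0 \<zeta> i)" by auto
    qed
  qed
  have agr: "sg adj f c0 \<zeta> t i = sg adj f c0 \<zeta>' t' i"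
    if "cnt adj f c0 \<zeta> i t = cnt adj f c0 \<zeta>' i t'" for t t'
  proof (rule S_lemma[OF assms(1,2) _ that])
    show "\<forall>k<cnt adj f c0 \<zeta> i t. Agree adj f c0 \<zeta> \<zeta>' i k" using Q1[of t] unfolding QQ_def[OF assms(1,2)] by blast
  qed
  show "history (\<lambda>t. fst (run adj f \<zeta> (\<sigma>0, \<delta>0) t) i)
           = history (\<lambda>t. fst (run adj f \<zeta>' (\<sigma>0, \<delta>0) t) i)"
    unfolding x1 x2
    by (rule history_eq[OF cnt_cstep[OF assms(1,2)] _ cnt_cstep[OF assms(1,2)] _ rng agr]) (simp_all add: cnt.simps(1)[OF assms(1,2)])
qed

end
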